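(* Let $A\in \mathrm{Mat}_{m\times n}(\mathbb{C})$ have rank $r\ge 1$, let $A^+$ be its Moore–Penrose pseudoinverse (if $A=U\Sigma V^*$ is a thin singular value decomposition with $\Sigma=\mathrm{diag}(\sigma_1,\dots,\sigma_r)$, then $A^+=V\Sigma^{-1}U^*$), let $\mathbb{U}\subseteq\mathbb{C}^m$ be the column space of $A$ and $\mathbb{V}\subseteq\mathbb{C}^n$ the column space of $A^T$. Then the decomposition locus of $A$ is \[ \mathcal{D}_A=\{(\mathbf{u},\mathbf{v})\in \mathbb{U}\times\mathbb{V} \;:\; \mathbf{v}^T A^+\mathbf{u}\neq 0\}. \]
   Context: A matrix $A\in\mathbb{C}^m\otimes\mathbb{C}^n$ is identified with a tensor, and $\mathbf{u}\otimes\mathbf{v}$ with the rank-one matrix $\mathbf{u}\mathbf{v}^T$. The rank $\mathrm{rk}(T)$ of a tensor $T\in\mathbb{C}^{n_1}\otimes\cdots\otimes\mathbb{C}^{n_k}$ is the minimal $r$ such that $T$ is a sum of $r$ tensors of the form $\mathbf{v}^1\otimes\cdots\otimes\mathbf{v}^k$. The decomposition locus of $T$ is $\mathcal{D}_T=\{(\mathbf{v}^1,\dots,\mathbf{v}^k)\in\mathbb{C}^{n_1}\times\cdots\times\mathbb{C}^{n_k} : \mathrm{rk}(T-\lambda\,\mathbf{v}^1\otimes\cdots\otimes\mathbf{v}^k)=\mathrm{rk}(T)-1 \text{ for some }\lambda\in\mathbb{C}\}$; the forbidden locus $\mathcal{F}_T$ is its complement. *)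

theory Defs
  imports "Jordan_Normal_Form.Schur_Decomposition"
begin

text \<open>Matrices are JNF matrices of type complex mat; a vector u in C^m is a complex vec in
  carrier_vec m.  The tensor u (x) v is the rank-one matrix u v^T.\<close>

definition outer :: "complex vec \<Rightarrow> complex vec \<Rightarrow> complex mat" where
  "outer u v = mat (dim_vec u) (dim_vec v) (\<lambda>(i,j). u $ i * v $ j)"

definition tensor_rank :: "complex mat \<Rightarrow> nat" where
  "tensor_rank A = (LEAST r. \<exists>us vs.
      (\<forall>k<r. us k \<in> carrier_vec (dim_row A) \<and> vs k \<in> carrier_vec (dim_col A)) \<and>
      A = mat (dim_row A) (dim_col A) (\<lambda>(i,j). \<Sum>k<r. (outer (us k) (vs k)) $$ (i,j)))"

definition decomposition_locus :: "complex mat \<Rightarrow> (complex vec \<times> complex vec) set" where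
  "decomposition_locus A = {(u,v). u \<in> carrier_vec (dim_row A) \<and> v \<in> carrier_vec (dim_col A) \<and>
      (\<exists>c::complex. tensor_rank (A - c \<cdot>\<^sub>m outer u v) = tensor_rank A - 1)}"

definition forbidden_locus :: "complex mat \<Rightarrow> (complex vec \<times> complex vec) set" where
  "forbidden_locus A = (carrier_vec (dim_row A) \<times> carrier_vec (dim_col A)) - decomposition_locus A"

definition column_space :: "complex mat \<Rightarrow> complex vec set" where
  "column_space A = {A *\<^sub>v x | x. x \<in> carrier_vec (dim_col A)}"

definition is_pinv_svd :: "complex mat \<Rightarrow> complex mat \<Rightarrow> bool" where
  "is_pinv_svd A P = (\<exists>r U V \<sigma>.
      U \<in> carrier_mat (dim_row A) r \<and> V \<in> carrier_mat (dim_col A) r \<and>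
      mat_adjoint U * U = 1\<^sub>m r \<and> mat_adjoint V * V = 1\<^sub>m r \<and>
      (\<forall>i<r. \<sigma> i > (0::real)) \<and>
      A = U * mat r r (\<lambda>(i,j). if i = j then complex_of_real (\<sigma> i) else 0) * mat_adjoint V \<and>
      P = V * mat r r (\<lambda>(i,j). if i = j then complex_of_real (1 / \<sigma> i) else 0) * mat_adjoint U)"

end

theory Submission
  imports Defs
begin

definition dec :: "complex mat \<Rightarrow> nat \<Rightarrow> (nat \<Rightarrow> complex vec) \<Rightarrow> (nat \<Rightarrow> complex vec) \<Rightarrow> bool" where
 "dec A r us vs \<longleftrightarrow> (\<forall>k<r. us k \<in> carrier_vec (dim_row A) \<and> vs k \<in> carrier_vec (dim_col A)) \<and>
    (\<forall>i<dim_row A. \<forall>j<dim_col A. A $$ (i,j) = (\<Sum>k<r. us k $ i * vs k $ j))"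

lemma tensor_rank_alt: "tensor_rank A = (LEAST r. \<exists>us vs. dec A r us vs)"
proof -
  have "(\<exists>us vs.
      (\<forall>k<r. us k \<in> carrier_vec (dim_row A) \<and> vs k \<in> carrier_vec (dim_col A)) \<and>
      A = mat (dim_row A) (dim_col A) (\<lambda>(i,j). \<Sum>k<r. (outer (us k) (vs k)) $$ (i,j)))
     = (\<exists>us vs. dec A r us vs)" for r
  proof (intro ex_cong1 iffI)
    fix us vs
    assume h: "(\<forall>k<r. us k \<in> carrier_vec (dim_row A) \<and> vs k \<in> carrier_vec (dim_col A)) \<and>
      A = mat (dim_row A) (dim_col A) (\<lambda>(i,j). \<Sum>k<r. (outer (us k) (vs k)) $$ (i,j))"
    show "dec A r us vs" unfolding dec_def
    proof (intro conjI allI impI)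
      fix i j assume "i < dim_row A" "j < dim_col A"
      then show "A $$ (i,j) = (\<Sum>k<r. us k $ i * vs k $ j)"
      proof -
        have "A $$ (i,j) = mat (dim_row A) (dim_col A) (\<lambda>(i,j). \<Sum>k<r. (outer (us k) (vs k)) $$ (i,j)) $$ (i,j)"
          using h by metis
        then show ?thesis using h \<open>i < dim_row A\<close> \<open>j < dim_col A\<close> by (auto simp: outer_def intro!: sum.cong)
      qed
    qed (use h in auto)
  next
    fix us vs assume h: "dec A r us vs"
    show "(\<forall>k<r. us k \<in> carrier_vec (dim_row A) \<and> vs k \<in> carrier_vec (dim_col A)) \<and>
      A = mat (dim_row A) (dim_col A) (\<lambda>(i,j). \<Sum>k<r. (outer (us k) (vs k)) $$ (i,j))"
      using h unfolding dec_def by (force intro!: eq_matI sum.cong simp: outer_def)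
  qed
  then show ?thesis unfolding tensor_rank_def by simp
qed

lemma dec_exists_some: "dec A (dim_col A) (\<lambda>k. col A k) (\<lambda>k. unit_vec (dim_col A) k)"
  unfolding dec_def
proof (intro conjI allI impI)
  fix i j assume i: "i < dim_row A" and j: "j < dim_col A"
  have "(\<Sum>k<dim_col A. col A k $ i * unit_vec (dim_col A) k $ j) = (\<Sum>k<dim_col A. if k = j then A $$ (i,j) else 0)"
    using i j by (intro sum.cong) (auto simp: unit_vec_def)
  also have "\<dots> = A $$ (i,j)" using j by simp
  finally show "A $$ (i,j) = (\<Sum>k<dim_col A. col A k $ i * unit_vec (dim_col A) k $ j)" by simp
qed auto

lemma tr_le: "dec A r us vs \<Longrightarrow> tensor_rank A \<le> r"
  unfolding tensor_rank_alt by (rule Least_le) blast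

lemma tr_ex: "\<exists>us vs. dec A (tensor_rank A) us vs"
  unfolding tensor_rank_alt by (rule LeastI_ex) (use dec_exists_some in blast)

definition sig :: "nat \<Rightarrow> nat \<Rightarrow> nat" where "sig j k = (if k < j then k else Suc k)"

lemma sig_bij: "j < r \<Longrightarrow> bij_betw (sig j) {..<r-1} ({..<r} - {j})"
  unfolding bij_betw_def
proof
  show "inj_on (sig j) {..<r-1}" by (auto simp: inj_on_def sig_def split: if_splits)
  assume j: "j < r"
  show "sig j ` {..<r-1} = {..<r} - {j}"
  proof
    show "sig j ` {..<r-1} \<subseteq> {..<r} - {j}" using j by (auto simp: sig_def)
    show "{..<r} - {j} \<subseteq> sig j ` {..<r-1}"
    proof
      fix k assume k: "k \<in> {..<r} - {j}"
      show "k \<in> sig j ` {..<r-1}"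
      proof (cases "k < j")
        case True then show ?thesis using j by (intro image_eqI[of _ _ k]) (auto simp: sig_def)
      next
        case False then show ?thesis using k j by (intro image_eqI[of _ _ "k - 1"]) (auto simp: sig_def)
      qed
    qed
  qed
qed

lemma reduce_sum:
  fixes a b lam :: "nat \<Rightarrow> complex"
  assumes j: "j < r" and lj: "lam j \<noteq> 0" and rel: "(\<Sum>k<r. lam k * b k) = 0"
  shows "(\<Sum>k<r. a k * b k) = (\<Sum>k<r-1. (a (sig j k) - lam (sig j k) / lam j * a j) * b (sig j k))"
proof -
  have "(\<Sum>k<r-1. (a (sig j k) - lam (sig j k) / lam j * a j) * b (sig j k))
      = (\<Sum>k\<in>{..<r}-{j}. (a k - lam k / lam j * a j) * b k)"
    using sum.reindex_bij_betw[OF sig_bij[OF j], of "\<lambda>k. (a k - lam k / lam j * a j) * b k"] by simp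
  also have "\<dots> = (\<Sum>k\<in>{..<r}-{j}. a k * b k) - a j / lam j * (\<Sum>k\<in>{..<r}-{j}. lam k * b k)"
    by (simp add: sum_distrib_left sum_subtractf algebra_simps)
  also have "(\<Sum>k\<in>{..<r}-{j}. lam k * b k) = - (lam j * b j)"
    using rel sum.remove[of "{..<r}" j "\<lambda>k. lam k * b k"] j by (simp add: eq_neg_iff_add_eq_0 add.commute)
  also have "(\<Sum>k\<in>{..<r}-{j}. a k * b k) = (\<Sum>k<r. a k * b k) - a j * b j"
    using sum.remove[of "{..<r}" j "\<lambda>k. a k * b k"] j by simp
  finally show ?thesis using lj by (simp add: field_simps)
qed

lemma reduce_dec:
  assumes d: "dec A r us vs" and j: "j < r" and lj: "lam j \<noteq> 0"
    and rel: "\<And>l. l < dim_col A \<Longrightarrow> (\<Sum>k<r. lam k * vs k $ l) = 0"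
  shows "dec A (r-1) (\<lambda>k. us (sig j k) - (lam (sig j k) / lam j) \<cdot>\<^sub>v us j) (\<lambda>k. vs (sig j k))"
  unfolding dec_def
proof (intro conjI allI impI)
  have sr: "k < r - 1 \<Longrightarrow> sig j k < r" for k using j by (auto simp: sig_def)
  fix k assume "k < r - 1"
  then show "us (sig j k) - (lam (sig j k) / lam j) \<cdot>\<^sub>v us j \<in> carrier_vec (dim_row A)"
    "vs (sig j k) \<in> carrier_vec (dim_col A)" using d sr j unfolding dec_def by auto
next
  have sr: "k < r - 1 \<Longrightarrow> sig j k < r" for k using j by (auto simp: sig_def)
  fix i l assume i: "i < dim_row A" and l: "l < dim_col A"
  have "A $$ (i,l) = (\<Sum>k<r. us k $ i * vs k $ l)" using d i l unfolding dec_def by auto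
  also have "\<dots> = (\<Sum>k<r-1. (us (sig j k) $ i - lam (sig j k) / lam j * us j $ i) * vs (sig j k) $ l)"
    by (rule reduce_sum[OF j lj rel[OF l]])
  also have "\<dots> = (\<Sum>k<r-1. (us (sig j k) - (lam (sig j k) / lam j) \<cdot>\<^sub>v us j) $ i * vs (sig j k) $ l)"
    using d sr j i unfolding dec_def by (intro sum.cong) auto
  finally show "A $$ (i,l) = (\<Sum>k<r-1. (us (sig j k) - (lam (sig j k) / lam j) \<cdot>\<^sub>v us j) $ i * vs (sig j k) $ l)" .
qed

lemma reduce_tr:
  assumes d: "dec A r us vs" and j: "j < r" and lj: "lam j \<noteq> 0"
    and rel: "\<And>l. l < dim_col A \<Longrightarrow> (\<Sum>k<r. lam k * vs k $ l) = 0"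
  shows "tensor_rank A \<le> r - 1"
  by (rule tr_le[OF reduce_dec[OF assms]])

lemma dec_transpose: "dec A r us vs \<Longrightarrow> dec (transpose_mat A) r vs us"
  unfolding dec_def by (auto simp: mult.commute)

lemma tr_transpose: "tensor_rank (transpose_mat A) = tensor_rank A"
proof (rule antisym)
  obtain us vs where "dec A (tensor_rank A) us vs" using tr_ex by blast
  then show "tensor_rank (transpose_mat A) \<le> tensor_rank A" by (intro tr_le) (rule dec_transpose)
  obtain us vs where "dec (transpose_mat A) (tensor_rank (transpose_mat A)) us vs" using tr_ex by blast
  then show "tensor_rank A \<le> tensor_rank (transpose_mat A)"
    using dec_transpose[of "transpose_mat A"] by (intro tr_le) (simp, blast)
qed

lemma dec_mult_left:
  assumes d: "dec B r us vs" and T: "T \<in> carrier_mat p (dim_row B)"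
  shows "dec (T * B) r (\<lambda>k. T *\<^sub>v us k) vs"
  unfolding dec_def
proof (intro conjI allI impI)
  fix k assume "k < r" then show "T *\<^sub>v us k \<in> carrier_vec (dim_row (T * B))" "vs k \<in> carrier_vec (dim_col (T * B))"
    using d T unfolding dec_def by auto
next
  fix i l assume i: "i < dim_row (T * B)" and l: "l < dim_col (T * B)"
  have "(T * B) $$ (i,l) = (\<Sum>t<dim_row B. T $$ (i,t) * B $$ (t,l))"
    using i l T by (auto simp: scalar_prod_def atLeast0LessThan intro!: sum.cong)
  also have "\<dots> = (\<Sum>t<dim_row B. T $$ (i,t) * (\<Sum>k<r. us k $ t * vs k $ l))"
    using d l unfolding dec_def by (intro sum.cong) auto
  also have "\<dots> = (\<Sum>k<r. (\<Sum>t<dim_row B. T $$ (i,t) * us k $ t) * vs k $ l)"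
    by (simp add: sum_distrib_left sum_distrib_right mult.assoc sum.swap[of _ "{..<r}"])
  also have "\<dots> = (\<Sum>k<r. (T *\<^sub>v us k) $ i * vs k $ l)"
    using d i T unfolding dec_def by (intro sum.cong) (auto simp: scalar_prod_def atLeast0LessThan intro!: sum.cong)
  finally show "(T * B) $$ (i,l) = (\<Sum>k<r. (T *\<^sub>v us k) $ i * vs k $ l)" .
qed

lemma tr_mult_left: "T \<in> carrier_mat p (dim_row B) \<Longrightarrow> tensor_rank (T * B) \<le> tensor_rank B"
  using tr_ex[of B] dec_mult_left tr_le by blast

lemma dec_add:
  assumes d: "dec B s us vs" and dims: "dim_row A = dim_row B" "dim_col A = dim_col B"
    and x: "x \<in> carrier_vec (dim_row B)" and y: "y \<in> carrier_vec (dim_col B)"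
    and e: "\<And>i j. i < dim_row B \<Longrightarrow> j < dim_col B \<Longrightarrow> A $$ (i,j) = B $$ (i,j) + x $ i * y $ j"
  shows "dec A (Suc s) (us(s:=x)) (vs(s:=y))"
  unfolding dec_def
proof (intro conjI allI impI)
  fix k assume "k < Suc s" then show "(us(s:=x)) k \<in> carrier_vec (dim_row A)" "(vs(s:=y)) k \<in> carrier_vec (dim_col A)"
    using d x y dims unfolding dec_def by (auto simp: less_Suc_eq)
next
  fix i j assume i: "i < dim_row A" and j: "j < dim_col A"
  have "(\<Sum>k<Suc s. (us(s:=x)) k $ i * (vs(s:=y)) k $ j) = (\<Sum>k<s. us k $ i * vs k $ j) + x $ i * y $ j"
    by (simp add: lessThan_Suc)
  also have "\<dots> = A $$ (i,j)" using d i j dims e unfolding dec_def by auto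
  finally show "A $$ (i,j) = (\<Sum>k<Suc s. (us(s:=x)) k $ i * (vs(s:=y)) k $ j)" by simp
qed

lemma adj_carrier: assumes "U \<in> carrier_mat a b" shows "mat_adjoint U \<in> carrier_mat b a"
proof -
  have "length (map conjugate (cols U)) = b" using assms by simp
  then show ?thesis unfolding mat_adjoint_def using mat_of_rows_carrier(1)[of a "map conjugate (cols U)"] assms by simp
qed

lemma cancel_left:
  fixes W V X :: "complex mat"
  assumes "W \<in> carrier_mat r a" "V \<in> carrier_mat a r" "W * V = 1\<^sub>m r" "X \<in> carrier_mat r k"
  shows "W * (V * X) = X"
proof -
  have "W * (V * X) = (W * V) * X" by (rule assoc_mult_mat[symmetric, of W r a V r X k]) (use assms in auto)
  also have "\<dots> = 1\<^sub>m r * X" using assms(3) by simp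
  also have "\<dots> = X" using assms(4) by (rule left_mult_one_mat)
  finally show ?thesis .
qed

lemma pinv_props:
  assumes A: "A \<in> carrier_mat m n" and p: "is_pinv_svd A P"
  shows "P \<in> carrier_mat n m" "A * P * A = A"
proof -
  from p obtain r U V \<sigma> where U: "U \<in> carrier_mat m r" and V: "V \<in> carrier_mat n r"
    and UU: "mat_adjoint U * U = 1\<^sub>m r" and VV: "mat_adjoint V * V = 1\<^sub>m r"
    and pos: "\<forall>i<r. \<sigma> i > (0::real)"
    and Ae: "A = U * mat r r (\<lambda>(i,j). if i = j then complex_of_real (\<sigma> i) else 0) * mat_adjoint V"
    and Pe: "P = V * mat r r (\<lambda>(i,j). if i = j then complex_of_real (1 / \<sigma> i) else 0) * mat_adjoint U"
    using A unfolding is_pinv_svd_def by auto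
  define S where "S = mat r r (\<lambda>(i,j). if i = j then complex_of_real (\<sigma> i) else 0)"
  define S' where "S' = mat r r (\<lambda>(i,j). if i = j then complex_of_real (1 / \<sigma> i) else 0)"
  have S: "S \<in> carrier_mat r r" and S': "S' \<in> carrier_mat r r" unfolding S_def S'_def by auto
  have Ua: "mat_adjoint U \<in> carrier_mat r m" and Va: "mat_adjoint V \<in> carrier_mat r n"
    using U V by (auto intro: adj_carrier)
  have SS: "S * S' = 1\<^sub>m r"
  proof (rule eq_matI)
    fix i j assume i: "i < dim_row (1\<^sub>m r)" and j: "j < dim_col (1\<^sub>m r)"
    have "(S * S') $$ (i,j) = (\<Sum>t\<in>{0..<r}. S $$ (i,t) * S' $$ (t,j))"
      using i j S S' by (simp add: scalar_prod_def)
    also have "\<dots> = (\<Sum>t\<in>{0..<r}. if t = i then S $$ (i,i) * S' $$ (i,j) else 0)"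
      using i j by (intro sum.cong) (auto simp: S_def S'_def)
    also have "\<dots> = S $$ (i,i) * S' $$ (i,j)" using i by simp
    also have "\<dots> = 1\<^sub>m r $$ (i,j)" using i j pos by (auto simp: S_def S'_def)
    finally show "(S * S') $$ (i,j) = 1\<^sub>m r $$ (i,j)" .
  qed (use S S' in auto)
  have Ae': "A = U * S * mat_adjoint V" and Pe': "P = V * S' * mat_adjoint U" using Ae Pe S_def S'_def by auto
  show "P \<in> carrier_mat n m" using Pe' V S' Ua by auto
  have "A * P = U * (S * (mat_adjoint V * (V * (S' * mat_adjoint U))))"
    unfolding Ae' Pe' using U S Va V S' Ua
    by (simp add: assoc_mult_mat[of U m r "S * mat_adjoint V" n "V * (S' * mat_adjoint U)" m]
        assoc_mult_mat[of S r r "mat_adjoint V" n "V * (S' * mat_adjoint U)" m])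
  also have "mat_adjoint V * (V * (S' * mat_adjoint U)) = S' * mat_adjoint U"
    by (rule cancel_left[OF Va V VV]) (use S' Ua in auto)
  also have "S * (S' * mat_adjoint U) = (S * S') * mat_adjoint U" using S S' Ua by simp
  also have "\<dots> = mat_adjoint U" using SS Ua by simp
  finally have AP: "A * P = U * mat_adjoint U" .
  have "A * P * A = (U * mat_adjoint U) * A" by (simp only: AP)
  also have "\<dots> = U * (mat_adjoint U * (U * (S * mat_adjoint V)))"
    unfolding Ae' using U S Va Ua
    by (simp add: assoc_mult_mat[of U m r "mat_adjoint U" m "U * (S * mat_adjoint V)" n])
  also have "mat_adjoint U * (U * (S * mat_adjoint V)) = S * mat_adjoint V"
    by (rule cancel_left[OF Ua U UU]) (use S Va in auto)
  also have "U * (S * mat_adjoint V) = A" using Ae' U S Va by simp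
  finally show "A * P * A = A" .
qed

lemma dec_apply:
  assumes d: "dec A r xs ys" and a: "a \<in> carrier_vec (dim_col A)" and i: "i < dim_row A"
  shows "(A *\<^sub>v a) $ i = (\<Sum>k<r. xs k $ i * (ys k \<bullet> a))"
proof -
  have "(A *\<^sub>v a) $ i = (\<Sum>l<dim_col A. A $$ (i,l) * a $ l)"
    using i a by (auto simp: scalar_prod_def atLeast0LessThan intro!: sum.cong)
  also have "\<dots> = (\<Sum>l<dim_col A. (\<Sum>k<r. xs k $ i * ys k $ l) * a $ l)"
    using d i unfolding dec_def by (intro sum.cong) auto
  also have "\<dots> = (\<Sum>k<r. xs k $ i * (\<Sum>l<dim_col A. ys k $ l * a $ l))"
    by (simp add: sum_distrib_left sum_distrib_right mult.assoc sum.swap[of _ "{..<r}"])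
  also have "\<dots> = (\<Sum>k<r. xs k $ i * (ys k \<bullet> a))"
    using a by (simp add: scalar_prod_def atLeast0LessThan)
  finally show ?thesis .
qed

lemma scal_pinv:
  fixes A P :: "complex mat"
  assumes A: "A \<in> carrier_mat m n" and P: "P \<in> carrier_mat n m" and APA: "A * P * A = A"
    and a: "a \<in> carrier_vec n" and b: "b \<in> carrier_vec m"
  shows "(transpose_mat A *\<^sub>v b) \<bullet> (P *\<^sub>v (A *\<^sub>v a)) = b \<bullet> (A *\<^sub>v a)"
proof -
  have "(transpose_mat A *\<^sub>v b) \<bullet> (P *\<^sub>v (A *\<^sub>v a)) = b \<bullet> (A *\<^sub>v (P *\<^sub>v (A *\<^sub>v a)))"
    by (rule transpose_vec_mult_scalar[OF A]) (use P A a b in auto)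
  also have "A *\<^sub>v (P *\<^sub>v (A *\<^sub>v a)) = (A * P * A) *\<^sub>v a"
  proof -
    have "(A * P * A) *\<^sub>v a = (A * P) *\<^sub>v (A *\<^sub>v a)"
      by (rule assoc_mult_mat_vec[of _ m m _ n]) (use A P a in auto)
    also have "\<dots> = A *\<^sub>v (P *\<^sub>v (A *\<^sub>v a))"
      by (rule assoc_mult_mat_vec[of _ m n _ m]) (use A P a in auto)
    finally show ?thesis by simp
  qed
  finally show ?thesis using APA by simp
qed

lemma min_cols:
  fixes A P :: "complex mat"
  assumes A: "A \<in> carrier_mat m n" and P: "P \<in> carrier_mat n m" and APA: "A * P * A = A"
    and d: "dec A (tensor_rank A) xs ys" and k: "k < tensor_rank A"
  shows "(A * P) *\<^sub>v xs k = xs k"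
proof (rule ccontr)
  let ?r = "tensor_rank A"
  let ?R = "A * P"
  have R: "?R \<in> carrier_mat m m" using A P by auto
  have xk: "xs k \<in> carrier_vec m" using d k A unfolding dec_def by auto
  assume ne: "?R *\<^sub>v xs k \<noteq> xs k"
  then obtain i where i: "i < m" and ni: "(?R *\<^sub>v xs k) $ i \<noteq> xs k $ i"
    using R xk by (metis carrier_vecD dim_mult_mat_vec carrier_matD(1) eq_vecI)
  define lam where "lam t = xs t $ i - (?R *\<^sub>v xs t) $ i" for t
  have dR: "dec (?R * A) ?r (\<lambda>t. ?R *\<^sub>v xs t) ys"
    by (rule dec_mult_left[OF d]) (use R A in auto)
  have RA: "?R * A = A" using APA .
  have rel: "(\<Sum>t<?r. lam t * ys t $ l) = 0" if l: "l < dim_col A" for l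
  proof -
    have "(\<Sum>t<?r. lam t * ys t $ l) = (\<Sum>t<?r. xs t $ i * ys t $ l) - (\<Sum>t<?r. (?R *\<^sub>v xs t) $ i * ys t $ l)"
      unfolding lam_def by (simp add: algebra_simps sum_subtractf)
    also have "(\<Sum>t<?r. xs t $ i * ys t $ l) = A $$ (i,l)" using d i l A unfolding dec_def by auto
    also have "(\<Sum>t<?r. (?R *\<^sub>v xs t) $ i * ys t $ l) = A $$ (i,l)"
      using dR i l A R unfolding dec_def RA by auto
    finally show ?thesis by simp
  qed
  have "?r \<le> ?r - 1" by (rule reduce_tr[OF d k _ rel]) (use ni lam_def in auto)
  then show False using k by simp
qed

lemma min_cols_space:
  fixes A P :: "complex mat"
  assumes A: "A \<in> carrier_mat m n" and P: "P \<in> carrier_mat n m" and APA: "A * P * A = A"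
    and u: "u \<in> carrier_vec m" and c: "c \<noteq> 0" and R: "(A * P) *\<^sub>v (c \<cdot>\<^sub>v u) = c \<cdot>\<^sub>v u"
  shows "u \<in> column_space A"
proof -
  have "(A * P) *\<^sub>v (c \<cdot>\<^sub>v u) = c \<cdot>\<^sub>v ((A * P) *\<^sub>v u)" by (rule mult_mat_vec) (use A P u in auto)
  then have "c \<cdot>\<^sub>v ((A * P) *\<^sub>v u) = c \<cdot>\<^sub>v u" using R by simp
  then have "(1/c) \<cdot>\<^sub>v (c \<cdot>\<^sub>v ((A * P) *\<^sub>v u)) = (1/c) \<cdot>\<^sub>v (c \<cdot>\<^sub>v u)" by simp
  then have "(A * P) *\<^sub>v u = u" using c by (simp add: smult_smult_assoc)
  then have "u = A *\<^sub>v (P *\<^sub>v u)" using A P u by simp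
  moreover have "P *\<^sub>v u \<in> carrier_vec (dim_col A)" using A P u by auto
  ultimately show ?thesis unfolding column_space_def by blast
qed

lemma outer_carrier[simp]: "u \<in> carrier_vec m \<Longrightarrow> v \<in> carrier_vec n \<Longrightarrow> outer u v \<in> carrier_mat m n"
  by (auto simp: outer_def)

lemma B_index:
  assumes A: "A \<in> carrier_mat m n" and u: "u \<in> carrier_vec m" and v: "v \<in> carrier_vec n"
    and i: "i < m" and l: "l < n"
  shows "(A - c \<cdot>\<^sub>m outer u v) $$ (i,l) = A $$ (i,l) - c * (u $ i * v $ l)"
  using A u v i l by (simp add: outer_def)

lemma B_carrier:
  assumes A: "A \<in> carrier_mat m n" and u: "u \<in> carrier_vec m" and v: "v \<in> carrier_vec n"
  shows "A - c \<cdot>\<^sub>m outer u v \<in> carrier_mat m n"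
  using A u v unfolding carrier_mat_def by (auto simp: outer_def)

lemma dir1:
  fixes A P :: "complex mat"
  assumes A: "A \<in> carrier_mat m n" and P: "P \<in> carrier_mat n m" and APA: "A * P * A = A"
    and a: "a \<in> carrier_vec n" and b: "b \<in> carrier_vec m"
    and ue: "u = A *\<^sub>v a" and ve: "v = transpose_mat A *\<^sub>v b"
    and nz: "v \<bullet> (P *\<^sub>v u) \<noteq> 0"
  shows "(u,v) \<in> decomposition_locus A"
proof -
  let ?r = "tensor_rank A"
  define \<delta> where "\<delta> = v \<bullet> (P *\<^sub>v u)"
  have u: "u \<in> carrier_vec m" and v: "v \<in> carrier_vec n" using ue ve A a b by auto
  have dbu: "\<delta> = b \<bullet> u" unfolding \<delta>_def ue ve by (rule scal_pinv[OF A P APA a b])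
  define c where "c = 1 / \<delta>"
  have cd: "c * \<delta> = 1" using nz unfolding c_def \<delta>_def by simp
  define B where "B = A - c \<cdot>\<^sub>m outer u v"
  have B: "B \<in> carrier_mat m n" unfolding B_def by (rule B_carrier[OF A u v])
  have Bi: "B $$ (i,l) = A $$ (i,l) - c * (u $ i * v $ l)" if "i < m" "l < n" for i l
    unfolding B_def by (rule B_index[OF A u v that])
  have lo: "?r - 1 \<le> tensor_rank B"
  proof -
    obtain xs ys where dB: "dec B (tensor_rank B) xs ys" using tr_ex by blast
    have "dec A (Suc (tensor_rank B)) (xs(tensor_rank B := c \<cdot>\<^sub>v u)) (ys(tensor_rank B := v))"
      by (rule dec_add[OF dB]) (use A B u v Bi in auto)
    then have "?r \<le> Suc (tensor_rank B)" by (rule tr_le)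
    then show ?thesis by simp
  qed
  have hi: "tensor_rank B \<le> ?r - 1"
  proof -
    obtain xs ys where d: "dec A ?r xs ys" using tr_ex by blast
    have xs: "k < ?r \<Longrightarrow> xs k \<in> carrier_vec m" and ys: "k < ?r \<Longrightarrow> ys k \<in> carrier_vec n" for k
      using d A unfolding dec_def by auto
    define p where "p k = ys k \<bullet> a" for k
    define q where "q k = xs k \<bullet> b" for k
    define zs where "zs k = ys k - (c * p k) \<cdot>\<^sub>v v" for k
    have ui: "u $ i = (\<Sum>k<?r. xs k $ i * p k)" if "i < m" for i
      unfolding ue p_def by (rule dec_apply[OF d]) (use A a that in auto)
    have vl: "v $ l = (\<Sum>k<?r. ys k $ l * q k)" if "l < n" for l
      unfolding ve q_def by (rule dec_apply[OF dec_transpose[OF d]]) (use A b that in auto)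
    have bu: "b \<bullet> u = (\<Sum>k<?r. q k * p k)"
    proof -
      have "b \<bullet> u = (\<Sum>t<m. b $ t * (\<Sum>k<?r. xs k $ t * p k))"
        using u ui by (auto simp: scalar_prod_def atLeast0LessThan intro!: sum.cong)
      also have "\<dots> = (\<Sum>k<?r. (\<Sum>t<m. xs k $ t * b $ t) * p k)"
        by (simp add: sum_distrib_left sum_distrib_right algebra_simps sum.swap[of _ "{..<?r}"])
      also have "\<dots> = (\<Sum>k<?r. q k * p k)"
        using xs b by (intro sum.cong) (auto simp: q_def scalar_prod_def atLeast0LessThan)
      finally show ?thesis .
    qed
    have dB: "dec B ?r xs zs" unfolding dec_def
    proof (intro conjI allI impI)
      fix k assume "k < ?r" then show "xs k \<in> carrier_vec (dim_row B)" "zs k \<in> carrier_vec (dim_col B)"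
        using xs ys B v by (auto simp: zs_def)
    next
      fix i l assume i: "i < dim_row B" and l: "l < dim_col B"
      then have i: "i < m" and l: "l < n" using B by auto
      have "B $$ (i,l) = (\<Sum>k<?r. xs k $ i * ys k $ l) - c * ((\<Sum>k<?r. xs k $ i * p k) * v $ l)"
        using Bi[OF i l] d i l A ui[OF i] unfolding dec_def by auto
      also have "\<dots> = (\<Sum>k<?r. xs k $ i * (ys k $ l - c * p k * v $ l))"
        by (simp add: sum_distrib_left sum_distrib_right algebra_simps sum_subtractf)
      also have "\<dots> = (\<Sum>k<?r. xs k $ i * zs k $ l)"
        using ys v l by (intro sum.cong) (auto simp: zs_def)
      finally show "B $$ (i,l) = (\<Sum>k<?r. xs k $ i * zs k $ l)" .
    qed
    have rel: "(\<Sum>k<?r. q k * zs k $ l) = 0" if l: "l < dim_col B" for l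
    proof -
      have l': "l < n" using l B by auto
      have "(\<Sum>k<?r. q k * zs k $ l) = (\<Sum>k<?r. q k * (ys k $ l - c * p k * v $ l))"
        using ys v l' by (intro sum.cong) (auto simp: zs_def)
      also have "\<dots> = (\<Sum>k<?r. ys k $ l * q k) - c * v $ l * (\<Sum>k<?r. q k * p k)"
        by (simp add: sum_distrib_left sum_distrib_right algebra_simps sum_subtractf)
      also have "\<dots> = v $ l - c * v $ l * \<delta>" using vl[OF l'] bu dbu by simp
      also have "\<dots> = 0" using cd by (simp add: algebra_simps)
      finally show ?thesis .
    qed
    obtain j where j: "j < ?r" and qj: "q j \<noteq> 0"
    proof -
      have "(\<Sum>k<?r. q k * p k) \<noteq> 0" using bu dbu nz \<delta>_def by simp
      then obtain j where "j \<in> {..<?r}" "q j * p j \<noteq> 0" by (meson sum.neutral)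
      then show ?thesis using that by auto
    qed
    show ?thesis by (rule reduce_tr[OF dB j qj rel])
  qed
  have "tensor_rank B = ?r - 1" using lo hi by simp
  then show ?thesis unfolding decomposition_locus_def B_def using u v A by auto
qed

lemma APA_transpose:
  fixes A P :: "complex mat"
  assumes A: "A \<in> carrier_mat m n" and P: "P \<in> carrier_mat n m" and APA: "A * P * A = A"
  shows "transpose_mat A * transpose_mat P * transpose_mat A = transpose_mat A"
proof -
  have "transpose_mat (A * P * A) = transpose_mat A * transpose_mat (A * P)"
    by (rule transpose_mult) (use A P in auto)
  also have "transpose_mat (A * P) = transpose_mat P * transpose_mat A"
    by (rule transpose_mult) (use A P in auto)
  finally have "transpose_mat A = transpose_mat A * (transpose_mat P * transpose_mat A)" using APA by simp
  also have "\<dots> = transpose_mat A * transpose_mat P * transpose_mat A"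
    by (rule assoc_mult_mat[symmetric, of _ n m _ n _ m]) (use A P in auto)
  finally show ?thesis by simp
qed

lemma dir2:
  fixes A P :: "complex mat"
  assumes A: "A \<in> carrier_mat m n" and P: "P \<in> carrier_mat n m" and APA: "A * P * A = A"
    and r1: "tensor_rank A \<ge> 1"
    and D: "(u,v) \<in> decomposition_locus A"
  shows "u \<in> column_space A \<and> v \<in> column_space (transpose_mat A) \<and> v \<bullet> (P *\<^sub>v u) \<noteq> 0"
proof -
  let ?r = "tensor_rank A"
  from D A obtain c where u: "u \<in> carrier_vec m" and v: "v \<in> carrier_vec n"
    and tB: "tensor_rank (A - c \<cdot>\<^sub>m outer u v) = ?r - 1"
    unfolding decomposition_locus_def by auto
  define B where "B = A - c \<cdot>\<^sub>m outer u v"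
  have B: "B \<in> carrier_mat m n" unfolding B_def by (rule B_carrier[OF A u v])
  have Bi: "B $$ (i,l) = A $$ (i,l) - c * (u $ i * v $ l)" if "i < m" "l < n" for i l
    unfolding B_def by (rule B_index[OF A u v that])
  have tB': "tensor_rank B = ?r - 1" using tB B_def by simp
  have c: "c \<noteq> 0"
  proof
    assume "c = 0"
    then have "B = A" using B A Bi by (intro eq_matI) auto
    then show False using tB' r1 by simp
  qed
  obtain xs ys where dB: "dec B (?r - 1) xs ys" using tr_ex[of B] tB' by auto
  have dA: "dec A (Suc (?r - 1)) (xs(?r - 1 := c \<cdot>\<^sub>v u)) (ys(?r - 1 := v))"
    by (rule dec_add[OF dB]) (use A B u v Bi in auto)
  have sr: "Suc (?r - 1) = ?r" using r1 by simp
  have dA': "dec A ?r (xs(?r - 1 := c \<cdot>\<^sub>v u)) (ys(?r - 1 := v))" using dA sr by simp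
  have kr: "?r - 1 < ?r" using r1 by simp
  have "(A * P) *\<^sub>v (c \<cdot>\<^sub>v u) = c \<cdot>\<^sub>v u"
    using min_cols[OF A P APA dA' kr] by simp
  then have uc: "u \<in> column_space A" by (rule min_cols_space[OF A P APA u c])
  have At: "transpose_mat A \<in> carrier_mat n m" and Pt: "transpose_mat P \<in> carrier_mat m n" using A P by auto
  have APAt: "transpose_mat A * transpose_mat P * transpose_mat A = transpose_mat A"
    by (rule APA_transpose[OF A P APA])
  have dAt: "dec (transpose_mat A) (tensor_rank (transpose_mat A)) (ys(?r - 1 := v)) (xs(?r - 1 := c \<cdot>\<^sub>v u))"
    using dec_transpose[OF dA'] tr_transpose[of A] by simp
  have krt: "?r - 1 < tensor_rank (transpose_mat A)" using kr tr_transpose[of A] by simp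
  have vR: "(transpose_mat A * transpose_mat P) *\<^sub>v (1 \<cdot>\<^sub>v v) = 1 \<cdot>\<^sub>v v"
    using min_cols[OF At Pt APAt dAt krt] by simp
  have vc: "v \<in> column_space (transpose_mat A)" using min_cols_space[OF At Pt APAt v _ vR] by simp
  obtain a where a: "a \<in> carrier_vec n" and ue: "u = A *\<^sub>v a"
    using uc A unfolding column_space_def by auto
  obtain b where b: "b \<in> carrier_vec m" and ve: "v = transpose_mat A *\<^sub>v b"
    using vc A unfolding column_space_def by auto
  have dbu: "v \<bullet> (P *\<^sub>v u) = b \<bullet> u" unfolding ue ve by (rule scal_pinv[OF A P APA a b])
  have "v \<bullet> (P *\<^sub>v u) \<noteq> 0"
  proof
    assume z: "v \<bullet> (P *\<^sub>v u) = 0"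
    then have bu0: "b \<bullet> u = 0" using dbu by simp
    define T where "T = 1\<^sub>m m + c \<cdot>\<^sub>m outer u b"
    have T: "T \<in> carrier_mat m m" unfolding T_def using u b unfolding carrier_mat_def by (auto simp: outer_def)
    have vl: "v $ l = (\<Sum>t<m. b $ t * A $$ (t,l))" if "l < n" for l
      unfolding ve using that A b by (auto simp: scalar_prod_def atLeast0LessThan intro!: sum.cong)
    have bB: "(\<Sum>t<m. b $ t * B $$ (t,l)) = v $ l" if l: "l < n" for l
    proof -
      have "(\<Sum>t<m. b $ t * B $$ (t,l)) = (\<Sum>t<m. b $ t * A $$ (t,l) - c * v $ l * (b $ t * u $ t))"
        using Bi l by (intro sum.cong) (simp_all add: right_diff_distrib)
      also have "\<dots> = (\<Sum>t<m. b $ t * A $$ (t,l)) - c * v $ l * (\<Sum>t<m. b $ t * u $ t)"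
        by (simp add: sum_distrib_left sum_subtractf)
      also have "(\<Sum>t<m. b $ t * u $ t) = b \<bullet> u" using u by (simp add: scalar_prod_def atLeast0LessThan)
      finally show ?thesis using bu0 vl[OF l] by simp
    qed
    have TB: "T * B = A"
    proof (rule eq_matI)
      fix i l assume i: "i < dim_row A" and l: "l < dim_col A"
      then have i: "i < m" and l: "l < n" using A by auto
      have "(T * B) $$ (i,l) = (\<Sum>t<m. T $$ (i,t) * B $$ (t,l))"
        using i l T B by (auto simp: scalar_prod_def atLeast0LessThan intro!: sum.cong)
      also have "\<dots> = (\<Sum>t<m. (if t = i then B $$ (t,l) else 0) + c * u $ i * (b $ t * B $$ (t,l)))"
        using i u b by (intro sum.cong) (auto simp: T_def outer_def algebra_simps)
      also have "\<dots> = B $$ (i,l) + c * u $ i * (\<Sum>t<m. b $ t * B $$ (t,l))"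
        using i by (simp add: sum.distrib sum_distrib_left)
      also have "\<dots> = A $$ (i,l)" using bB[OF l] Bi[OF i l] by simp
      finally show "(T * B) $$ (i,l) = A $$ (i,l)" .
    qed (use T B A in auto)
    have "?r \<le> tensor_rank B" using tr_mult_left[of T m B] T B TB by simp
    then show False using tB' r1 by simp
  qed
  then show ?thesis using uc vc by simp
qed

theorem proposition3p1:
  fixes A P :: "complex mat" and m n r :: nat
  assumes "A \<in> carrier_mat m n"
    and "tensor_rank A = r" and "r \<ge> 1"
    and "is_pinv_svd A P"
  shows "decomposition_locus A =
    {(u,v). u \<in> column_space A \<and> v \<in> column_space (transpose_mat A) \<and> v \<bullet> (P *\<^sub>v u) \<noteq> 0}"
proof -
  have A: "A \<in> carrier_mat m n" by fact
  have P: "P \<in> carrier_mat n m" and APA: "A * P * A = A" using pinv_props[OF A assms(4)] by auto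
  have r1: "tensor_rank A \<ge> 1" using assms by simp
  show ?thesis
  proof (rule Set.set_eqI, rule iffI)
    fix x assume "x \<in> decomposition_locus A"
    then obtain u v where x: "x = (u,v)" and D: "(u,v) \<in> decomposition_locus A" by (cases x) auto
    show "x \<in> {(u,v). u \<in> column_space A \<and> v \<in> column_space (transpose_mat A) \<and> v \<bullet> (P *\<^sub>v u) \<noteq> 0}"
      using dir2[OF A P APA r1 D] x by simp
  next
    fix x assume "x \<in> {(u,v). u \<in> column_space A \<and> v \<in> column_space (transpose_mat A) \<and> v \<bullet> (P *\<^sub>v u) \<noteq> 0}"
    then obtain u v where x: "x = (u,v)" and uc: "u \<in> column_space A"
      and vc: "v \<in> column_space (transpose_mat A)" and nz: "v \<bullet> (P *\<^sub>v u) \<noteq> 0" by auto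
    obtain a where a: "a \<in> carrier_vec n" and ue: "u = A *\<^sub>v a"
      using uc A unfolding column_space_def by auto
    obtain b where b: "b \<in> carrier_vec m" and ve: "v = transpose_mat A *\<^sub>v b"
      using vc A unfolding column_space_def by auto
    show "x \<in> decomposition_locus A" using dir1[OF A P APA a b ue ve nz] x by simp
  qed
qed

end
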